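(* Let $n\ge 1$ and $L\ge 1$. For each $i=1,\dots,n$ let $\Phi_i$ be a network of the form $\Phi_i(\mathbf{e})=\mathbf{W}_i^{L}\,\sigma(\mathbf{W}_i^{L-1}(\cdots\sigma(\mathbf{W}_i^{1}\mathbf{e})))$, where each $\sigma$ is applied elementwise and is either $\sin(\cdot)$ or $\texttt{ReLU}(\cdot)$, and where the input $\mathbf{e}$ is a coordinate in an arbitrary spectral coordinate system (e.g. a truncated Laplacian eigenvector embedding of a graph node). Define the factorized model $$\Phi(\mathbf{e}_1,\dots,\mathbf{e}_n)=\mathcal{M}\times_1\Phi_1(\mathbf{e}_1)\times_2\Phi_2(\mathbf{e}_2)\cdots\times_n\Phi_n(\mathbf{e}_n),$$ where $\mathcal{M}$ is a core tensor of compatible size and $\times_k$ is the mode-$k$ tensor–vector product. Assume that the $\ell_1$ norm of every weight matrix $\mathbf{W}_i^{(\ell)}$ is bounded by $\xi$ and the $\ell_1$ norm of $\mathcal{M}$ is bounded by $\eta$. Let $\delta=\max\{|\mathbf{e}_i| : i=1,\dots,n\}$ (and analogously including primed coordinates where they appear). Then for every $k\in\{1,\dots,n\}$, $$|\Phi(\mathbf{e}_1,\dots,\mathbf{e}_k,\dots,\mathbf{e}_n)-\Phi(\mathbf{e}_1,\dots,\mathbf{e}_k',\dots,\mathbf{e}_n)|\le\eta\,\xi^{nL}\,\delta^{n-1}\,|\mathbf{e}_k-\mathbf{e}_k'|,$$ so $\Phi$ is Lipschitz continuous in each argument of an arbitrary spectral coordinate system.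
   Context: $|\cdot|$ denotes the $\ell_1$ norm (for matrices, the corresponding norm bounding $|\mathbf{W}\mathbf{x}|\le|\mathbf{W}||\mathbf{x}|$). The networks have no bias terms. The mode-$k$ product of a tensor $\mathcal{M}\in\mathbb{R}^{n_1\times\cdots\times n_n}$ with a vector $\mathbf{u}\in\mathbb{R}^{n_k}$ contracts the $k$-th index of $\mathcal{M}$ against $\mathbf{u}$; after all $n$ products the result is a scalar. *)

theory Defs
  imports "HOL-Analysis.Analysis"
begin

text \<open>Vectors are functions nat => real with an explicit dimension; matrices nat => nat => real
  (row, column) with explicit row/column counts. Indices start at 0.\<close>

definition relu :: "real \<Rightarrow> real" where
  "relu x = max 0 x"

definition vnorm1 :: "nat \<Rightarrow> (nat \<Rightarrow> real) \<Rightarrow> real" where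
  "vnorm1 m x = (\<Sum>i<m. \<bar>x i\<bar>)"

text \<open>Induced l1 operator norm of an m x n matrix: maximal absolute column sum.\<close>
definition mat_norm1 :: "(nat \<Rightarrow> nat \<Rightarrow> real) \<Rightarrow> nat \<Rightarrow> nat \<Rightarrow> real" where
  "mat_norm1 A m n = Max (insert 0 {(\<Sum>i<m. \<bar>A i j\<bar>) | j. j < n})"

definition matvec :: "(nat \<Rightarrow> nat \<Rightarrow> real) \<Rightarrow> nat \<Rightarrow> (nat \<Rightarrow> real) \<Rightarrow> (nat \<Rightarrow> real)" where
  "matvec A n x = (\<lambda>i. \<Sum>j<n. A i j * x j)"

text \<open>Bias-free MLP: mlp act W d L e = W_L act_{L-1}( ... act_1 (W_1 e)),
  where W l is a (d l) x (d (l-1)) matrix and act l is applied elementwise after layer l.\<close>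
fun mlp :: "(nat \<Rightarrow> real \<Rightarrow> real) \<Rightarrow> (nat \<Rightarrow> nat \<Rightarrow> nat \<Rightarrow> real) \<Rightarrow> (nat \<Rightarrow> nat)
             \<Rightarrow> nat \<Rightarrow> (nat \<Rightarrow> real) \<Rightarrow> (nat \<Rightarrow> real)" where
  "mlp act W d 0 e = e"
| "mlp act W d (Suc 0) e = matvec (W 1) (d 0) e"
| "mlp act W d (Suc (Suc l)) e =
     matvec (W (Suc (Suc l))) (d (Suc l)) (\<lambda>j. act (Suc l) (mlp act W d (Suc l) e j))"

text \<open>Multi-indices of an order-n tensor with mode sizes r 0, ..., r (n-1).\<close>
definition tindices :: "nat \<Rightarrow> (nat \<Rightarrow> nat) \<Rightarrow> (nat \<Rightarrow> nat) set" where
  "tindices n r = PiE {..<n} (\<lambda>i. {..<r i})"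

definition tensor_norm1 :: "nat \<Rightarrow> (nat \<Rightarrow> nat) \<Rightarrow> ((nat \<Rightarrow> nat) \<Rightarrow> real) \<Rightarrow> real" where
  "tensor_norm1 n r M = (\<Sum>J\<in>tindices n r. \<bar>M J\<bar>)"

text \<open>Full contraction M x_1 u_1 x_2 u_2 ... x_n u_n (all mode products).\<close>
definition contract :: "nat \<Rightarrow> (nat \<Rightarrow> nat) \<Rightarrow> ((nat \<Rightarrow> nat) \<Rightarrow> real) \<Rightarrow> (nat \<Rightarrow> nat \<Rightarrow> real) \<Rightarrow> real" where
  "contract n r M u = (\<Sum>J\<in>tindices n r. M J * (\<Prod>i<n. u i (J i)))"

text \<open>Factorized model Phi(e_0..e_{n-1}) = M x_1 Phi_0(e_0) ... x_n Phi_{n-1}(e_{n-1});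
  network i has weights W i l (l = 1..L), layer widths d i l (l = 0..L), activations act i l.\<close>
definition fact_model :: "nat \<Rightarrow> nat \<Rightarrow> ((nat \<Rightarrow> nat) \<Rightarrow> real) \<Rightarrow> (nat \<Rightarrow> nat \<Rightarrow> real \<Rightarrow> real)
    \<Rightarrow> (nat \<Rightarrow> nat \<Rightarrow> nat \<Rightarrow> nat \<Rightarrow> real) \<Rightarrow> (nat \<Rightarrow> nat \<Rightarrow> nat) \<Rightarrow> (nat \<Rightarrow> nat \<Rightarrow> real) \<Rightarrow> real" where
  "fact_model n L M act W d e =
     contract n (\<lambda>i. d i L) M (\<lambda>i. mlp (act i) (W i) (d i) L (e i))"

end

theory Submission
  imports Defs
begin


lemma sin_lip: "\<bar>sin (a::real) - sin b\<bar> \<le> \<bar>a - b\<bar>"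
proof -
  have "\<bar>sin a - sin b\<bar> = 2 * \<bar>sin ((a - b) / 2)\<bar> * \<bar>cos ((a + b) / 2)\<bar>"
    by (simp add: sin_diff_sin abs_mult)
  also have "\<dots> \<le> 2 * \<bar>(a - b) / 2\<bar> * 1"
    by (intro mult_mono abs_sin_x_le_abs_x) auto
  finally show ?thesis by simp
qed

lemma act_lip: "(f::real\<Rightarrow>real) = sin \<or> f = relu \<Longrightarrow> \<bar>f a - f b\<bar> \<le> \<bar>a - b\<bar>"
  using sin_lip[of a b] by (auto simp: relu_def)

lemma vnorm1_nonneg: "0 \<le> vnorm1 m x"
  by (simp add: vnorm1_def sum_nonneg)

lemma mat_norm1_nonneg: "0 \<le> mat_norm1 A m n"
  unfolding mat_norm1_def by (rule Max_ge) auto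

lemma col_le_mat_norm1: "j < n \<Longrightarrow> (\<Sum>i<m. \<bar>A i j\<bar>) \<le> mat_norm1 A m n"
  unfolding mat_norm1_def by (rule Max_ge) auto

lemma matvec_bound: "vnorm1 m (matvec A n x) \<le> mat_norm1 A m n * vnorm1 n x"
proof -
  have "vnorm1 m (matvec A n x) = (\<Sum>i<m. \<bar>\<Sum>j<n. A i j * x j\<bar>)"
    by (simp add: vnorm1_def matvec_def)
  also have "\<dots> \<le> (\<Sum>i<m. \<Sum>j<n. \<bar>A i j\<bar> * \<bar>x j\<bar>)"
    by (intro sum_mono order_trans[OF sum_abs]) (simp add: abs_mult)
  also have "\<dots> = (\<Sum>j<n. (\<Sum>i<m. \<bar>A i j\<bar>) * \<bar>x j\<bar>)"
    by (subst sum.swap) (simp add: sum_distrib_right)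
  also have "\<dots> \<le> (\<Sum>j<n. mat_norm1 A m n * \<bar>x j\<bar>)"
    by (intro sum_mono mult_right_mono col_le_mat_norm1) auto
  also have "\<dots> = mat_norm1 A m n * vnorm1 n x"
    by (simp add: vnorm1_def sum_distrib_left)
  finally show ?thesis .
qed

lemma matvec_diff: "(\<lambda>i. matvec A n x i - matvec A n y i) = matvec A n (\<lambda>j. x j - y j)"
  by (simp add: matvec_def sum_subtractf[symmetric] right_diff_distrib)

lemma mlp_lip_Suc:
  assumes "\<forall>l\<in>{1..<Suc L}. act l = sin \<or> act l = relu"
    and "\<forall>l\<in>{1..Suc L}. mat_norm1 (W l) (d l) (d (l - 1)) \<le> \<xi>"
  shows "vnorm1 (d (Suc L)) (\<lambda>j. mlp act W d (Suc L) x j - mlp act W d (Suc L) y j)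
         \<le> \<xi> ^ Suc L * vnorm1 (d 0) (\<lambda>j. x j - y j)"
  using assms
proof (induction L)
  case 0
  then have "mat_norm1 (W 1) (d 1) (d 0) \<le> \<xi>" by auto
  then show ?case
    using matvec_bound[of "d 1" "W 1" "d 0" "\<lambda>j. x j - y j"] vnorm1_nonneg[of "d 0" "\<lambda>j. x j - y j"]
    by (simp add: matvec_diff) (meson mult_right_mono order_trans)
next
  case (Suc L)
  have "mat_norm1 (W 1) (d 1) (d (1 - 1)) \<le> \<xi>" using Suc.prems(2)[rule_format, of 1] by simp
  hence xi0: "0 \<le> \<xi>" using mat_norm1_nonneg[of "W 1" "d 1" "d (1 - 1)"] by linarith
  have IH: "vnorm1 (d (Suc L)) (\<lambda>j. mlp act W d (Suc L) x j - mlp act W d (Suc L) y j)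
         \<le> \<xi> ^ Suc L * vnorm1 (d 0) (\<lambda>j. x j - y j)"
    by (rule Suc.IH) (use Suc.prems in auto)
  have a: "act (Suc L) = sin \<or> act (Suc L) = relu" using Suc.prems(1)[rule_format, of "Suc L"] by simp
  have w: "mat_norm1 (W (Suc (Suc L))) (d (Suc (Suc L))) (d (Suc L)) \<le> \<xi>"
    using Suc.prems(2)[rule_format, of "Suc (Suc L)"] by simp
  let ?u = "\<lambda>j. act (Suc L) (mlp act W d (Suc L) x j) - act (Suc L) (mlp act W d (Suc L) y j)"
  have "vnorm1 (d (Suc (Suc L))) (\<lambda>j. mlp act W d (Suc (Suc L)) x j - mlp act W d (Suc (Suc L)) y j)
     = vnorm1 (d (Suc (Suc L))) (matvec (W (Suc (Suc L))) (d (Suc L)) ?u)"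
    by (simp only: mlp.simps matvec_diff)
  also have "\<dots> \<le> mat_norm1 (W (Suc (Suc L))) (d (Suc (Suc L))) (d (Suc L)) * vnorm1 (d (Suc L)) ?u"
    by (rule matvec_bound)
  also have "\<dots> \<le> \<xi> * vnorm1 (d (Suc L)) ?u"
    by (intro mult_right_mono w vnorm1_nonneg)
  also have "vnorm1 (d (Suc L)) ?u \<le> vnorm1 (d (Suc L)) (\<lambda>j. mlp act W d (Suc L) x j - mlp act W d (Suc L) y j)"
    unfolding vnorm1_def by (intro sum_mono act_lip a)
  hence "\<xi> * vnorm1 (d (Suc L)) ?u \<le> \<xi> * (\<xi> ^ Suc L * vnorm1 (d 0) (\<lambda>j. x j - y j))"
    using IH xi0 by (meson mult_left_mono order_trans)
  finally show ?case by (simp add: mult.assoc)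
qed

lemma mlp_zero:
  assumes "\<forall>l\<in>{1..<L}. act l = sin \<or> act l = relu"
  shows "mlp act W d L (\<lambda>_. 0) = (\<lambda>_. 0)"
  using assms
proof (induction act W d L "\<lambda>_::nat. 0::real" rule: mlp.induct)
  case (3 act W d l)
  from "3.prems" have "act (Suc l) = sin \<or> act (Suc l) = relu" by auto
  then have "act (Suc l) 0 = 0" by (auto simp: relu_def)
  then show ?case using 3 by (auto simp: matvec_def)
qed (auto simp: matvec_def)


lemma entry_le_vnorm1: "j < m \<Longrightarrow> \<bar>x j\<bar> \<le> vnorm1 m x"
  unfolding vnorm1_def by (rule member_le_sum) auto

lemma contract_diff:
  assumes k: "k < n" and same: "\<forall>i<n. i \<noteq> k \<longrightarrow> u' i = u i"
  shows "\<bar>contract n r M u - contract n r M u'\<bar>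
     \<le> tensor_norm1 n r M * (\<Prod>i\<in>{..<n}-{k}. vnorm1 (r i) (u i)) * vnorm1 (r k) (\<lambda>j. u k j - u' k j)"
proof -
  let ?S = "{..<n}-{k}"
  let ?P = "\<lambda>J. \<Prod>i\<in>?S. u i (J i)"
  let ?N = "\<Prod>i\<in>?S. vnorm1 (r i) (u i)"
  let ?D = "vnorm1 (r k) (\<lambda>j. u k j - u' k j)"
  have fin: "finite (tindices n r)" by (simp add: tindices_def finite_PiE)
  have kin: "k \<in> {..<n}" using k by simp
  have eq: "M J * (\<Prod>i<n. u i (J i)) - M J * (\<Prod>i<n. u' i (J i))
       = M J * ((u k (J k) - u' k (J k)) * ?P J)" for J
  proof -
    have "(\<Prod>i<n. u i (J i)) = u k (J k) * ?P J" by (rule prod.remove[OF _ kin]) simp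
    moreover have "(\<Prod>i\<in>?S. u' i (J i)) = ?P J"
      by (rule prod.cong) (use same in auto)
    moreover have "(\<Prod>i<n. u' i (J i)) = u' k (J k) * (\<Prod>i\<in>?S. u' i (J i))"
      by (rule prod.remove[OF _ kin]) simp
    ultimately show ?thesis by (simp add: right_diff_distrib left_diff_distrib)
  qed
  have "contract n r M u - contract n r M u' = (\<Sum>J\<in>tindices n r. M J * ((u k (J k) - u' k (J k)) * ?P J))"
    unfolding contract_def by (simp add: sum_subtractf[symmetric] eq)
  hence "\<bar>contract n r M u - contract n r M u'\<bar> \<le> (\<Sum>J\<in>tindices n r. \<bar>M J * ((u k (J k) - u' k (J k)) * ?P J)\<bar>)"
    by (simp add: sum_abs)
  also have "\<dots> \<le> (\<Sum>J\<in>tindices n r. \<bar>M J\<bar> * (?D * ?N))"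
  proof (rule sum_mono)
    fix J assume J: "J \<in> tindices n r"
    have Jb: "\<And>i. i < n \<Longrightarrow> J i < r i" using J by (auto simp: tindices_def PiE_iff)
    have "\<bar>?P J\<bar> = (\<Prod>i\<in>?S. \<bar>u i (J i)\<bar>)" by (simp add: abs_prod)
    also have "\<dots> \<le> ?N"
      by (intro prod_mono conjI entry_le_vnorm1 Jb) auto
    finally have p: "\<bar>?P J\<bar> \<le> ?N" .
    have dd: "\<bar>u k (J k) - u' k (J k)\<bar> \<le> ?D"
      using entry_le_vnorm1[OF Jb[OF k], of "\<lambda>j. u k j - u' k j"] by simp
    have "\<bar>(u k (J k) - u' k (J k)) * ?P J\<bar> \<le> ?D * ?N"
      unfolding abs_mult by (intro mult_mono dd p) (auto simp: vnorm1_nonneg)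
    then show "\<bar>M J * ((u k (J k) - u' k (J k)) * ?P J)\<bar> \<le> \<bar>M J\<bar> * (?D * ?N)"
      unfolding abs_mult[of "M J"] by (intro mult_left_mono) auto
  qed
  also have "\<dots> = tensor_norm1 n r M * ?N * ?D"
    unfolding tensor_norm1_def sum_distrib_right[symmetric] by (simp add: ac_simps)
  finally show ?thesis .
qed

lemma mlp_lip:
  assumes "L \<ge> 1" "\<forall>l\<in>{1..<L}. act l = sin \<or> act l = relu"
    and "\<forall>l\<in>{1..L}. mat_norm1 (W l) (d l) (d (l - 1)) \<le> \<xi>"
  shows "vnorm1 (d L) (\<lambda>j. mlp act W d L x j - mlp act W d L y j)
         \<le> \<xi> ^ L * vnorm1 (d 0) (\<lambda>j. x j - y j)"
  using mlp_lip_Suc[of "L - 1" act W d \<xi> x y] assms by simp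

lemma mlp_norm:
  assumes "L \<ge> 1" "\<forall>l\<in>{1..<L}. act l = sin \<or> act l = relu"
    and "\<forall>l\<in>{1..L}. mat_norm1 (W l) (d l) (d (l - 1)) \<le> \<xi>"
  shows "vnorm1 (d L) (mlp act W d L x) \<le> \<xi> ^ L * vnorm1 (d 0) x"
  using mlp_lip[OF assms, of x "\<lambda>_. 0"] mlp_zero[OF assms(2), of W d] by simp

theorem lemma5:
  fixes n L k :: nat
    and d :: "nat \<Rightarrow> nat \<Rightarrow> nat"
    and W :: "nat \<Rightarrow> nat \<Rightarrow> nat \<Rightarrow> nat \<Rightarrow> real"
    and act :: "nat \<Rightarrow> nat \<Rightarrow> real \<Rightarrow> real"
    and M :: "(nat \<Rightarrow> nat) \<Rightarrow> real"
    and \<xi> \<eta> :: real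
    and e :: "nat \<Rightarrow> nat \<Rightarrow> real"
    and e' :: "nat \<Rightarrow> real"
  assumes "n \<ge> 1" and "L \<ge> 1"
    and "\<forall>i<n. \<forall>l\<in>{1..<L}. act i l = sin \<or> act i l = relu"
    and "\<forall>i<n. \<forall>l\<in>{1..L}. mat_norm1 (W i l) (d i l) (d i (l - 1)) \<le> \<xi>"
    and "tensor_norm1 n (\<lambda>i. d i L) M \<le> \<eta>"
    and "k < n"
  shows "\<bar>fact_model n L M act W d e - fact_model n L M act W d (e(k := e'))\<bar>
         \<le> \<eta> * \<xi> ^ (n * L)
             * (Max ({vnorm1 (d i 0) (e i) | i. i < n} \<union> {vnorm1 (d k 0) e'})) ^ (n - 1)
             * vnorm1 (d k 0) (\<lambda>j. e k j - e' j)"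
proof -
  let ?T = "\<lambda>i. d i L"
  define u where "u = (\<lambda>i. mlp (act i) (W i) (d i) L (e i))"
  define u' where "u' = (\<lambda>i. mlp (act i) (W i) (d i) L ((e(k := e')) i))"
  define \<delta> where "\<delta> = Max ({vnorm1 (d i 0) (e i) | i. i < n} \<union> {vnorm1 (d k 0) e'})"
  define V where "V = vnorm1 (d k 0) (\<lambda>j. e k j - e' j)"
  let ?S = "{..<n}-{k}"
  have "mat_norm1 (W 0 1) (d 0 1) (d 0 (1 - 1)) \<le> \<xi>" using assms(4)[rule_format, of 0 1] assms(1,2) by simp
  hence xi0: "0 \<le> \<xi>" using mat_norm1_nonneg[of "W 0 1" "d 0 1" "d 0 (1 - 1)"] by linarith
  have "0 \<le> tensor_norm1 n ?T M" unfolding tensor_norm1_def by (rule sum_nonneg) simp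
  hence eta0: "0 \<le> \<eta>" using assms(5) by linarith
  have same: "\<forall>i<n. i \<noteq> k \<longrightarrow> u' i = u i" by (simp add: u_def u'_def)
  have C: "\<bar>contract n ?T M u - contract n ?T M u'\<bar>
     \<le> tensor_norm1 n ?T M * (\<Prod>i\<in>?S. vnorm1 (d i L) (u i)) * vnorm1 (d k L) (\<lambda>j. u k j - u' k j)"
    by (rule contract_diff[OF assms(6) same])
  have fin: "finite ({vnorm1 (d i 0) (e i) | i. i < n} \<union> {vnorm1 (d k 0) e'})" by simp
  have del: "vnorm1 (d i 0) (e i) \<le> \<delta>" if "i < n" for i
    unfolding \<delta>_def by (rule Max_ge[OF fin]) (use that in blast)
  have del0: "0 \<le> \<delta>" using del[OF assms(6)] vnorm1_nonneg[of "d k 0" "e k"] by linarith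
  have un: "vnorm1 (d i L) (u i) \<le> \<xi> ^ L * \<delta>" if "i < n" for i
  proof -
    have a1: "\<forall>l\<in>{1..<L}. act i l = sin \<or> act i l = relu" using assms(3) that by blast
    have a2: "\<forall>l\<in>{1..L}. mat_norm1 (W i l) (d i l) (d i (l - 1)) \<le> \<xi>" using assms(4) that by blast
    have "vnorm1 (d i L) (u i) \<le> \<xi> ^ L * vnorm1 (d i 0) (e i)"
      unfolding u_def using mlp_norm[OF assms(2) a1 a2] by simp
    also have "\<dots> \<le> \<xi> ^ L * \<delta>" by (intro mult_left_mono del that) (simp add: xi0)
    finally show ?thesis .
  qed
  have N: "(\<Prod>i\<in>?S. vnorm1 (d i L) (u i)) \<le> (\<xi> ^ L * \<delta>) ^ (n - 1)"
  proof -
    have "(\<Prod>i\<in>?S. vnorm1 (d i L) (u i)) \<le> (\<Prod>i\<in>?S. \<xi> ^ L * \<delta>)"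
      by (intro prod_mono conjI vnorm1_nonneg un) auto
    also have "\<dots> = (\<xi> ^ L * \<delta>) ^ (n - 1)" using assms(6) by simp
    finally show ?thesis .
  qed
  have D: "vnorm1 (d k L) (\<lambda>j. u k j - u' k j) \<le> \<xi> ^ L * V"
  proof -
    have a1: "\<forall>l\<in>{1..<L}. act k l = sin \<or> act k l = relu" using assms(3,6) by blast
    have a2: "\<forall>l\<in>{1..L}. mat_norm1 (W k l) (d k l) (d k (l - 1)) \<le> \<xi>" using assms(4,6) by blast
    show ?thesis unfolding u_def u'_def V_def using mlp_lip[OF assms(2) a1 a2] by simp
  qed
  have p0: "0 \<le> (\<Prod>i\<in>?S. vnorm1 (d i L) (u i))" by (intro prod_nonneg) (simp add: vnorm1_nonneg)
  have TN: "tensor_norm1 n ?T M * (\<Prod>i\<in>?S. vnorm1 (d i L) (u i)) \<le> \<eta> * (\<xi> ^ L * \<delta>) ^ (n - 1)"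
    by (rule mult_mono[OF assms(5) N eta0 p0])
  have chain: "tensor_norm1 n ?T M * (\<Prod>i\<in>?S. vnorm1 (d i L) (u i)) * vnorm1 (d k L) (\<lambda>j. u k j - u' k j)
     \<le> \<eta> * (\<xi> ^ L * \<delta>) ^ (n - 1) * (\<xi> ^ L * V)"
    by (rule mult_mono[OF TN D]) (simp_all add: eta0 xi0 del0 vnorm1_nonneg)
  have nl: "n * L = L * (n - 1) + L" using assms(1) by (cases n) auto
  have pw: "\<xi> ^ (n * L) = (\<xi> ^ L) ^ (n - 1) * \<xi> ^ L"
    unfolding nl power_add power_mult by simp
  have R: "\<eta> * (\<xi> ^ L * \<delta>) ^ (n - 1) * (\<xi> ^ L * V) = \<eta> * \<xi> ^ (n * L) * \<delta> ^ (n - 1) * V"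
    unfolding pw power_mult_distrib by (simp add: ac_simps)
  have F1: "fact_model n L M act W d e = contract n ?T M u" by (simp add: fact_model_def u_def)
  have F2: "fact_model n L M act W d (e(k := e')) = contract n ?T M u'" by (simp add: fact_model_def u'_def)
  show ?thesis
    unfolding F1 F2 \<delta>_def[symmetric] V_def[symmetric] R[symmetric]
    by (rule order_trans[OF C chain])
qed

end
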